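(* For any two infinite cardinals $p\ge q$, the generalized Baer--Levi semigroup $B(p,q)$ is not DSC.
   Context: Let $X$ be a set of cardinality $p$. $B(p,q)=\{f\colon X\to X \mid f\text{ injective and } |X\setminus Xf|=q\}$ (where $Xf$ is the image of $f$), a semigroup under composition of functions. For a semigroup $T$, a diagonal subsemigroup of $T\times T$ is a subsemigroup containing $\{(t,t)\colon t\in T\}$; a congruence is a symmetric and transitive diagonal subsemigroup; $T$ is DSC if every diagonal subsemigroup of $T\times T$ is a congruence on $T$. *)

theory Defs
  imports Main "HOL-Library.FuncSet" "HOL-Library.Equipollence"
begin

text \<open>Generalized Baer--Levi semigroup B(p,q) on a set X with |X| = p, where q is
  represented as the cardinality of a set Q: injective maps f : X -> X
  (extensional, i.e. undefined outside X) with X - f`X equipotent to Q.\<close>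
definition BL :: "'a set \<Rightarrow> 'b set \<Rightarrow> ('a \<Rightarrow> 'a) set" where
  "BL X Q = {f \<in> X \<rightarrow>\<^sub>E X. inj_on f X \<and> (X - f ` X) \<approx> Q}"

text \<open>Product in B(p,q): maps act on the right, so f g means first f, then g.\<close>
definition BL_mult :: "'a set \<Rightarrow> ('a \<Rightarrow> 'a) \<Rightarrow> ('a \<Rightarrow> 'a) \<Rightarrow> ('a \<Rightarrow> 'a)" where
  "BL_mult X f g = compose X g f"

definition diagonal_subsemigroup :: "'s set \<Rightarrow> ('s \<Rightarrow> 's \<Rightarrow> 's) \<Rightarrow> ('s \<times> 's) set \<Rightarrow> bool" where
  "diagonal_subsemigroup S mult R \<longleftrightarrow>
     R \<subseteq> S \<times> S \<and>
     (\<forall>a b c d. (a, b) \<in> R \<longrightarrow> (c, d) \<in> R \<longrightarrow> (mult a c, mult b d) \<in> R) \<and>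
     (\<forall>t\<in>S. (t, t) \<in> R)"

definition semigroup_congruence :: "'s set \<Rightarrow> ('s \<Rightarrow> 's \<Rightarrow> 's) \<Rightarrow> ('s \<times> 's) set \<Rightarrow> bool" where
  "semigroup_congruence S mult R \<longleftrightarrow>
     diagonal_subsemigroup S mult R \<and> sym R \<and> trans R"

definition DSC :: "'s set \<Rightarrow> ('s \<Rightarrow> 's \<Rightarrow> 's) \<Rightarrow> bool" where
  "DSC S mult \<longleftrightarrow>
     (\<forall>R. diagonal_subsemigroup S mult R \<longrightarrow> semigroup_congruence S mult R)"

end

theory Submission imports Defs begin
unbundle cardinal_syntax

lemma lepoll_ordLeq: "A \<lesssim> B \<longleftrightarrow> |A| \<le>o |B|"
  by (metis card_of_ordLeq lepoll_def)

lemma s1_img: "(\<lambda>(n::nat,y). if y \<in> Q' then (Suc n, y) else (n, y)) ` (UNIV \<times> X) = UNIV \<times> X - {0} \<times> Q'"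
proof (rule set_eqI, rule iffI)
  fix t :: "nat \<times> _" assume "t \<in> (\<lambda>(n::nat,y). if y \<in> Q' then (Suc n, y) else (n, y)) ` (UNIV \<times> X)"
  then show "t \<in> UNIV \<times> X - {0} \<times> Q'" by (auto split: if_splits)
next
  fix t :: "nat \<times> _" assume t: "t \<in> UNIV \<times> X - {0} \<times> Q'"
  obtain n y where ny: "t = (n,y)" by fastforce
  show "t \<in> (\<lambda>(n::nat,y). if y \<in> Q' then (Suc n, y) else (n, y)) ` (UNIV \<times> X)"
  proof (cases "y \<in> Q'")
    case True
    then obtain m where "n = Suc m" using t ny by (cases n) auto
    then show ?thesis using True t ny by (auto intro!: image_eqI[where x="(m,y)"])
  next
    case False
    then show ?thesis using t ny by (auto intro!: image_eqI[where x="(n,y)"])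
  qed
qed

lemma s2_img: "(\<lambda>(n::nat,y). if y \<in> Q' \<and> n \<ge> 1 then (Suc n, y) else (n, y)) ` (UNIV \<times> X) = UNIV \<times> X - {1} \<times> Q'"
proof (rule set_eqI, rule iffI)
  fix t :: "nat \<times> _" assume "t \<in> (\<lambda>(n::nat,y). if y \<in> Q' \<and> n \<ge> 1 then (Suc n, y) else (n, y)) ` (UNIV \<times> X)"
  then show "t \<in> UNIV \<times> X - {1} \<times> Q'" by (auto split: if_splits)
next
  fix t :: "nat \<times> _" assume t: "t \<in> UNIV \<times> X - {1} \<times> Q'"
  obtain n y where ny: "t = (n,y)" by fastforce
  show "t \<in> (\<lambda>(n::nat,y). if y \<in> Q' \<and> n \<ge> 1 then (Suc n, y) else (n, y)) ` (UNIV \<times> X)"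
  proof (cases "y \<in> Q' \<and> n \<ge> 2")
    case True
    then obtain m where "n = Suc m" "m \<ge> 1" using t ny by (cases n) auto
    then show ?thesis using True t ny by (auto intro!: image_eqI[where x="(m,y)"])
  next
    case False
    then have "\<not> (y \<in> Q' \<and> n \<ge> 1)" using t ny by auto
    then show ?thesis using t ny by (auto intro!: image_eqI[where x="(n,y)"])
  qed
qed

lemma s1_inj: "inj_on (\<lambda>(n::nat,y). if y \<in> Q' then (Suc n, y) else (n, y)) T"
  by (auto simp: inj_on_def split: if_splits)
lemma s2_inj: "inj_on (\<lambda>(n::nat,y). if y \<in> Q' \<and> n \<ge> 1 then (Suc n, y) else (n, y)) T"
  by (auto simp: inj_on_def split: if_splits)

lemma transport:
  assumes h: "bij_betw h T X" and s: "inj_on s T" "s ` T \<subseteq> T"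
  defines "f \<equiv> restrict (\<lambda>x. h (s (inv_into T h x))) X"
  shows "f \<in> X \<rightarrow>\<^sub>E X" "inj_on f X" "X - f ` X = h ` (T - s ` T)"
proof -
  have hi: "inj_on h T" and hX: "h ` T = X" using h by (auto simp: bij_betw_def)
  have inv: "\<And>x. x \<in> X \<Longrightarrow> inv_into T h x \<in> T \<and> h (inv_into T h x) = x"
    using hX by (auto intro: inv_into_into f_inv_into_f)
  have img: "f ` X = h ` (s ` T)"
  proof
    show "f ` X \<subseteq> h ` s ` T" using inv by (auto simp: f_def)
    show "h ` s ` T \<subseteq> f ` X"
    proof
      fix z assume "z \<in> h ` s ` T"
      then obtain t where t: "t \<in> T" "z = h (s t)" by auto
      have "h t \<in> X" using t hX by auto
      moreover have "inv_into T h (h t) = t" using hi t by (simp add: inv_into_f_f)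
      ultimately show "z \<in> f ` X" using t by (auto simp: f_def intro!: image_eqI[where x="h t"])
    qed
  qed
  show "f \<in> X \<rightarrow>\<^sub>E X" using inv s(2) hX by (auto simp: f_def)
  show "inj_on f X"
  proof (rule inj_onI)
    fix x y assume xy: "x \<in> X" "y \<in> X" "f x = f y"
    then have "h (s (inv_into T h x)) = h (s (inv_into T h y))" by (simp add: f_def)
    then have "s (inv_into T h x) = s (inv_into T h y)" using hi inv xy s(2)
      by (meson image_subset_iff inj_onD)
    then have "inv_into T h x = inv_into T h y" using s(1) inv xy by (meson inj_onD)
    then show "x = y" using inv xy by metis
  qed
  show "X - f ` X = h ` (T - s ` T)" unfolding img using hi hX s(2)
    by (metis Diff_subset inj_on_image_set_diff)
qed


lemma infinite_Un_eqpoll: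
  assumes "infinite Q" "A \<approx> Q" "B \<approx> Q"
  shows "A \<union> B \<approx> Q"
proof (rule lepoll_antisym)
  have "A \<union> B \<lesssim> A <+> B" using card_of_Un_Plus_ordLeq lepoll_ordLeq by blast
  also have "A <+> B \<approx> Q <+> Q" using assms by (simp add: sum_eqpoll_cong)
  also have "Q <+> Q \<approx> Q" using card_of_Plus_infinite1[of Q Q, OF assms(1) card_of_mono1[OF subset_refl]]
    by (simp add: eqpoll_iff_card_of_ordIso)
  finally show "A \<union> B \<lesssim> Q" .
  have "Q \<lesssim> A" using assms(2) eqpoll_sym eqpoll_imp_lepoll by blast
  then show "Q \<lesssim> A \<union> B" by (meson lepoll_trans subset_imp_lepoll sup_ge1)
qed

lemma mult_closed:
  assumes "infinite Q" "F \<in> BL X Q" "G \<in> BL X Q"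
  shows "BL_mult X F G \<in> BL X Q"
proof -
  have F: "F \<in> X \<rightarrow>\<^sub>E X" "inj_on F X" "X - F ` X \<approx> Q"
   and G: "G \<in> X \<rightarrow>\<^sub>E X" "inj_on G X" "X - G ` X \<approx> Q" using assms by (auto simp: BL_def)
  have FX: "F ` X \<subseteq> X" using F(1) by auto
  have GX: "G ` X \<subseteq> X" using G(1) by auto
  have img: "BL_mult X F G ` X = G ` F ` X" by (auto simp: BL_mult_def compose_def)
  have "X - G ` F ` X = (X - G ` X) \<union> G ` (X - F ` X)"
    using G(2) FX GX by (auto simp: inj_on_image_set_diff)
  moreover have "G ` (X - F ` X) \<approx> Q"
    using F(3) G(2) by (meson Diff_subset eqpoll_trans inj_on_image_eqpoll_self inj_on_subset eqpoll_sym)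
  ultimately have "X - G ` F ` X \<approx> Q" using infinite_Un_eqpoll assms(1) G(3) by metis
  moreover have "BL_mult X F G \<in> X \<rightarrow>\<^sub>E X" using F(1) G(1) by (auto simp: BL_mult_def compose_def)
  moreover have "inj_on (BL_mult X F G) X" using F G FX
    unfolding BL_mult_def compose_def inj_on_def by (simp add: image_subset_iff)
  ultimately show ?thesis using img by (simp add: BL_def)
qed

lemma defect_mult:
  assumes "z \<notin> G ` X" "F ` X \<subseteq> X" shows "z \<notin> BL_mult X F G ` X"
  using assms by (auto simp: BL_mult_def compose_def)

lemma defect_nonempty:
  assumes "infinite Q" "F \<in> BL X Q" shows "\<exists>z\<in>X. z \<notin> F ` X"
proof -
  have "X - F ` X \<approx> Q" using assms by (auto simp: BL_def)
  then have "X - F ` X \<noteq> {}" using assms(1) eqpoll_finite_iff by fastforce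
  then show ?thesis by auto
qed


lemma exists_pair:
  fixes X :: "'a set" and Q :: "'b set"
  assumes Qi: "infinite Q" and QX: "Q \<lesssim> X"
  shows "\<exists>a b x0. a \<in> BL X Q \<and> b \<in> BL X Q \<and> x0 \<in> X \<and> x0 \<notin> a ` X \<and> x0 \<in> b ` X
            \<and> (\<forall>z\<in>X. z \<in> a ` X \<or> z \<in> b ` X)"
proof -
  have Xi: "infinite X"
  proof
    assume "finite X"
    obtain g where "inj_on g Q" "g ` Q \<subseteq> X" using QX by (auto simp: lepoll_def)
    then show False using \<open>finite X\<close> Qi by (meson finite_imageD finite_subset)
  qed
  let ?T = "(UNIV::nat set) \<times> X"
  have "?T \<lesssim> X \<times> X" using Xi by (simp add: infinite_le_lepoll times_lepoll_mono)
  also have "X \<times> X \<approx> X" using Xi card_of_Times_same_infinite eqpoll_iff_card_of_ordIso by blast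
  finally have l1: "?T \<lesssim> X" .
  have "X \<lesssim> ?T" unfolding lepoll_def by (rule exI[where x="\<lambda>x. (0,x)"]) (auto simp: inj_on_def)
  then have "?T \<approx> X" using l1 lepoll_antisym by blast
  then obtain h where h: "bij_betw h ?T X" by (auto simp: eqpoll_def)
  have hi: "inj_on h ?T" and hX: "h ` ?T = X" using h by (auto simp: bij_betw_def)
  obtain g where g: "inj_on g Q" "g ` Q \<subseteq> X" using QX by (auto simp: lepoll_def)
  define Q' where "Q' = g ` Q"
  have Q'Q: "Q' \<approx> Q" unfolding Q'_def using g(1) by (simp add: inj_on_image_eqpoll_self)
  have Q'X: "Q' \<subseteq> X" using g Q'_def by auto
  have "Q' \<noteq> {}" using Q'Q Qi eqpoll_finite_iff by (metis finite.emptyI)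
  then obtain q0 where q0: "q0 \<in> Q'" by blast
  define s1 where "s1 = (\<lambda>(n::nat,y). if y \<in> Q' then (Suc n, y) else (n, y))"
  define s2 where "s2 = (\<lambda>(n::nat,y). if y \<in> Q' \<and> n \<ge> 1 then (Suc n, y) else (n, y))"
  have s1i: "s1 ` ?T = ?T - {0} \<times> Q'" unfolding s1_def by (rule s1_img)
  have s2i: "s2 ` ?T = ?T - {1} \<times> Q'" unfolding s2_def by (rule s2_img)
  have d1: "?T - s1 ` ?T = {0} \<times> Q'" using s1i Q'X by auto
  have d2: "?T - s2 ` ?T = {1} \<times> Q'" using s2i Q'X by auto
  define a where "a = restrict (\<lambda>x. h (s1 (inv_into ?T h x))) X"
  define b where "b = restrict (\<lambda>x. h (s2 (inv_into ?T h x))) X"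
  have s1sub: "s1 ` ?T \<subseteq> ?T" using s1i by blast
  have s1inj: "inj_on s1 ?T" unfolding s1_def by (rule s1_inj)
  have s2sub: "s2 ` ?T \<subseteq> ?T" using s2i by blast
  have s2inj: "inj_on s2 ?T" unfolding s2_def by (rule s2_inj)
  note tA = transport[OF h s1inj s1sub]
  note tB = transport[OF h s2inj s2sub]
  have A: "a \<in> X \<rightarrow>\<^sub>E X" "inj_on a X" "X - a ` X = h ` ({0} \<times> Q')"
    unfolding a_def using tA(1) apply assumption
    unfolding a_def using tA(2) apply assumption
    unfolding a_def by (rule tA(3)[unfolded d1])
  have B: "b \<in> X \<rightarrow>\<^sub>E X" "inj_on b X" "X - b ` X = h ` ({1} \<times> Q')"
    unfolding b_def using tB(1) apply assumption
    unfolding b_def using tB(2) apply assumption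
    unfolding b_def by (rule tB(3)[unfolded d2])
  have sub1: "{0::nat} \<times> Q' \<subseteq> ?T" "{1::nat} \<times> Q' \<subseteq> ?T" using Q'X by auto
  have "h ` ({0} \<times> Q') \<approx> {0::nat} \<times> Q'" by (rule inj_on_image_eqpoll_self[OF inj_on_subset[OF hi sub1(1)]])
  also have "{0::nat} \<times> Q' \<approx> Q'" by (rule times_singleton_eqpoll)
  also note Q'Q
  finally have "h ` ({0} \<times> Q') \<approx> Q" .
  then have aB: "a \<in> BL X Q" using A by (simp add: BL_def)
  have "h ` ({1} \<times> Q') \<approx> {1::nat} \<times> Q'" by (rule inj_on_image_eqpoll_self[OF inj_on_subset[OF hi sub1(2)]])
  also have "{1::nat} \<times> Q' \<approx> Q'" by (rule times_singleton_eqpoll)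
  also note Q'Q
  finally have "h ` ({1} \<times> Q') \<approx> Q" .
  then have bB: "b \<in> BL X Q" using B by (simp add: BL_def)
  define x0 where "x0 = h (0, q0)"
  have x0X: "x0 \<in> X" using hX q0 Q'X x0_def by auto
  have "x0 \<in> X - a ` X" using A(3) q0 x0_def by auto
  moreover have "x0 \<notin> X - b ` X"
  proof
    assume "x0 \<in> X - b ` X"
    then obtain t where t: "t \<in> {1} \<times> Q'" "h t = h (0,q0)" using B(3) x0_def by auto
    have "(0::nat,q0) \<in> ?T" using q0 Q'X by auto
    moreover have "t \<in> ?T" using t(1) sub1(2) by blast
    ultimately have "t = (0,q0)" using hi t(2) by (simp add: inj_on_eq_iff)
    then show False using t(1) by simp
  qed
  moreover have "\<forall>z\<in>X. z \<in> a ` X \<or> z \<in> b ` X"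
  proof
    fix z assume z: "z \<in> X"
    show "z \<in> a ` X \<or> z \<in> b ` X"
    proof (rule ccontr)
      assume "\<not> ?thesis"
      then have "z \<in> h ` ({0} \<times> Q')" "z \<in> h ` ({1} \<times> Q')" using A(3) B(3) z by auto
      then obtain t1 t2 where tt: "t1 \<in> {0} \<times> Q'" "t2 \<in> {1} \<times> Q'" "h t1 = h t2" by auto
      have "t1 \<in> ?T" "t2 \<in> ?T" using tt sub1 by blast+
      then have "t1 = t2" using hi tt(3) by (simp add: inj_on_eq_iff)
      then show False using tt by auto
    qed
  qed
  ultimately show ?thesis using aB bB x0X by blast
qed

theorem mainTheorem12:
  fixes X :: "'a set" and Q :: "'b set"
  assumes "infinite Q" and "Q \<lesssim> X"
  shows "\<not> DSC (BL X Q) (BL_mult X)"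
proof
  assume dsc: "DSC (BL X Q) (BL_mult X)"
  obtain a b x0 where ab: "a \<in> BL X Q" "b \<in> BL X Q" "x0 \<in> X" "x0 \<notin> a ` X" "x0 \<in> b ` X"
    "\<forall>z\<in>X. z \<in> a ` X \<or> z \<in> b ` X" using exists_pair[OF assms] by blast
  define S where "S = BL X Q"
  define R where "R = {(F,G). F \<in> S \<and> G \<in> S \<and> (F = G \<or> (\<exists>z\<in>X. z \<notin> F ` X \<and> z \<notin> G ` X) \<or> x0 \<notin> F ` X)}"
  have img: "\<And>F. F \<in> S \<Longrightarrow> F ` X \<subseteq> X" by (auto simp: S_def BL_def)
  have "diagonal_subsemigroup S (BL_mult X) R"
    unfolding diagonal_subsemigroup_def
  proof (intro conjI allI impI ballI)
    show "R \<subseteq> S \<times> S" by (auto simp: R_def)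
  next
    fix t assume "t \<in> S" then show "(t,t) \<in> R" by (auto simp: R_def)
  next
    fix F G F' G' assume r1: "(F,G) \<in> R" and r2: "(F',G') \<in> R"
    have inS: "F \<in> S" "G \<in> S" "F' \<in> S" "G' \<in> S" using r1 r2 by (auto simp: R_def)
    have mS: "BL_mult X F F' \<in> S" "BL_mult X G G' \<in> S"
      using inS mult_closed[OF assms(1)] by (auto simp: S_def)
    have "(\<exists>z\<in>X. z \<notin> BL_mult X F F' ` X \<and> z \<notin> BL_mult X G G' ` X) \<or> x0 \<notin> BL_mult X F F' ` X"
    proof -
      consider "F' = G'" | "\<exists>z\<in>X. z \<notin> F' ` X \<and> z \<notin> G' ` X" | "x0 \<notin> F' ` X"
        using r2 by (auto simp: R_def)
      then show ?thesis
      proof cases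
        case 1
        obtain z where "z \<in> X" "z \<notin> F' ` X" using defect_nonempty[OF assms(1), of F' X] inS(3) unfolding S_def by blast
        then show ?thesis using 1 defect_mult[OF _ img[OF inS(1)]] defect_mult[OF _ img[OF inS(2)]] by blast
      next
        case 2
        then show ?thesis using defect_mult[OF _ img[OF inS(1)]] defect_mult[OF _ img[OF inS(2)]] by blast
      next
        case 3
        then show ?thesis using defect_mult[OF _ img[OF inS(1)]] defect_mult[OF _ img[OF inS(2)]] by blast
      qed
    qed
    then show "(BL_mult X F F', BL_mult X G G') \<in> R" using mS by (auto simp: R_def)
  qed
  then have "sym R" using dsc by (auto simp: DSC_def semigroup_congruence_def S_def)
  moreover have "(a,b) \<in> R" using ab by (auto simp: R_def S_def)
  ultimately have "(b,a) \<in> R" by (meson symD)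
  then show False using ab by (auto simp: R_def)
qed

end
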